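(* Let $D:V\to\mathbb{N}$ be a pebble distribution on the infinite square grid (vertex set $\mathbb{Z}^2$, with $u,v$ adjacent iff they differ by $1$ in exactly one coordinate) such that $W_D(u)\ge 1$ for every vertex $u$. If a vertex $v$ satisfies $D(v)=k\ge 1$, then the excess weight at $v$ satisfies $\widehat W_D(v)\ge \frac{12}{25}k$.
   Context: For a distribution $D$, the weight function is $W_D(u)=\sum_{w}D(w)2^{-d(u,w)}$, where $d$ is graph distance (here the $\ell_1$ distance on $\mathbb{Z}^2$). The excess weight is $\widehat W_D(u)=W_D(u)-1$ if $W_D(u)>1$ and $\widehat W_D(u)=W_D(u)$ if $W_D(u)\le 1$. *)

theory Defs
  imports "HOL-Analysis.Analysis" "HOL-Library.Extended_Nonnegative_Real"
begin

text \<open>Vertices of the infinite square grid are pairs of integers; graph distance is the l1 distance.\<close>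
definition grid_dist :: "int \<times> int \<Rightarrow> int \<times> int \<Rightarrow> nat" where
  "grid_dist u w = nat (\<bar>fst u - fst w\<bar> + \<bar>snd u - snd w\<bar>)"

text \<open>Weight function, valued in extended nonnegative reals (so that infinite
  support and divergent sums are handled: the sum is then infinity).\<close>
definition weight :: "(int \<times> int \<Rightarrow> nat) \<Rightarrow> int \<times> int \<Rightarrow> ennreal" where
  "weight D u = (\<Sum>\<^sub>\<infinity> w. ennreal (real (D w) * (1/2) ^ grid_dist u w))"

definition excess_weight :: "(int \<times> int \<Rightarrow> nat) \<Rightarrow> int \<times> int \<Rightarrow> ennreal" where
  "excess_weight D u = (if weight D u > 1 then weight D u - 1 else weight D u)"

end

theory Submission imports Defs begin
lemma key:
  fixes a b :: int
  shows "(1/2::real)^nat(\<bar>1-a\<bar>+\<bar>1-b\<bar>) + (1/2)^nat(\<bar>-1-a\<bar>+\<bar>1-b\<bar>) + (1/2)^nat(\<bar>1-a\<bar>+\<bar>-1-b\<bar>) + (1/2)^nat(\<bar>-1-a\<bar>+\<bar>-1-b\<bar>)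
     + (if a=0 \<and> b=0 then 21/4 else 0) \<le> 25/4 * (1/2)^nat(\<bar>a\<bar>+\<bar>b\<bar>)"
proof -
  have P: "(1/2::real)^n \<ge> 0" for n :: nat by simp
  consider "a \<ge> 1" | "a = 0" | "a \<le> -1" by linarith
  then show ?thesis
  proof cases
    case 1
    then consider "b \<ge> 1" | "b = 0" | "b \<le> -1" by linarith
    then show ?thesis
    proof cases
      case 1
      define m where "m = nat(\<bar>a\<bar>+\<bar>b\<bar>-2)"
      have e: "nat(\<bar>1-a\<bar>+\<bar>1-b\<bar>) = m" "nat(\<bar>-1-a\<bar>+\<bar>1-b\<bar>) = m+2" "nat(\<bar>1-a\<bar>+\<bar>-1-b\<bar>) = m+2"
        "nat(\<bar>-1-a\<bar>+\<bar>-1-b\<bar>) = m+4" "nat(\<bar>a\<bar>+\<bar>b\<bar>) = m+2" using \<open>a\<ge>1\<close> 1 unfolding m_def by auto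
      show ?thesis unfolding e using \<open>a\<ge>1\<close> 1 P[of m] by (simp add: power_add eval_nat_numeral)
    next
      case 2
      define m where "m = nat(\<bar>a\<bar>+\<bar>b\<bar>)"
      have e: "nat(\<bar>1-a\<bar>+\<bar>1-b\<bar>) = m" "nat(\<bar>-1-a\<bar>+\<bar>1-b\<bar>) = m+2" "nat(\<bar>1-a\<bar>+\<bar>-1-b\<bar>) = m"
        "nat(\<bar>-1-a\<bar>+\<bar>-1-b\<bar>) = m+2" "nat(\<bar>a\<bar>+\<bar>b\<bar>) = m" using \<open>a\<ge>1\<close> 2 unfolding m_def by auto
      show ?thesis unfolding e using \<open>a\<ge>1\<close> 2 P[of m] by (simp add: power_add eval_nat_numeral)
    next
      case 3
      define m where "m = nat(\<bar>a\<bar>+\<bar>b\<bar>-2)"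
      have e: "nat(\<bar>1-a\<bar>+\<bar>1-b\<bar>) = m+2" "nat(\<bar>-1-a\<bar>+\<bar>1-b\<bar>) = m+4" "nat(\<bar>1-a\<bar>+\<bar>-1-b\<bar>) = m"
        "nat(\<bar>-1-a\<bar>+\<bar>-1-b\<bar>) = m+2" "nat(\<bar>a\<bar>+\<bar>b\<bar>) = m+2" using \<open>a\<ge>1\<close> 3 unfolding m_def by auto
      show ?thesis unfolding e using \<open>a\<ge>1\<close> 3 P[of m] by (simp add: power_add eval_nat_numeral)
    qed
  next
    case 2
    then consider "b \<ge> 1" | "b = 0" | "b \<le> -1" by linarith
    then show ?thesis
    proof cases
      case 1
      define m where "m = nat(\<bar>a\<bar>+\<bar>b\<bar>)"
      have e: "nat(\<bar>1-a\<bar>+\<bar>1-b\<bar>) = m" "nat(\<bar>-1-a\<bar>+\<bar>1-b\<bar>) = m" "nat(\<bar>1-a\<bar>+\<bar>-1-b\<bar>) = m+2"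
        "nat(\<bar>-1-a\<bar>+\<bar>-1-b\<bar>) = m+2" "nat(\<bar>a\<bar>+\<bar>b\<bar>) = m" using \<open>a=0\<close> 1 unfolding m_def by auto
      show ?thesis unfolding e using \<open>a=0\<close> 1 P[of m] by (simp add: power_add eval_nat_numeral)
    next
      case 2
      show ?thesis using \<open>a=0\<close> 2 by (simp add: power2_eq_square)
    next
      case 3
      define m where "m = nat(\<bar>a\<bar>+\<bar>b\<bar>)"
      have e: "nat(\<bar>1-a\<bar>+\<bar>1-b\<bar>) = m+2" "nat(\<bar>-1-a\<bar>+\<bar>1-b\<bar>) = m+2" "nat(\<bar>1-a\<bar>+\<bar>-1-b\<bar>) = m"
        "nat(\<bar>-1-a\<bar>+\<bar>-1-b\<bar>) = m" "nat(\<bar>a\<bar>+\<bar>b\<bar>) = m" using \<open>a=0\<close> 3 unfolding m_def by auto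
      show ?thesis unfolding e using \<open>a=0\<close> 3 P[of m] by (simp add: power_add eval_nat_numeral)
    qed
  next
    case 3
    then consider "b \<ge> 1" | "b = 0" | "b \<le> -1" by linarith
    then show ?thesis
    proof cases
      case 1
      define m where "m = nat(\<bar>a\<bar>+\<bar>b\<bar>-2)"
      have e: "nat(\<bar>1-a\<bar>+\<bar>1-b\<bar>) = m+2" "nat(\<bar>-1-a\<bar>+\<bar>1-b\<bar>) = m" "nat(\<bar>1-a\<bar>+\<bar>-1-b\<bar>) = m+4"
        "nat(\<bar>-1-a\<bar>+\<bar>-1-b\<bar>) = m+2" "nat(\<bar>a\<bar>+\<bar>b\<bar>) = m+2" using \<open>a\<le>-1\<close> 1 unfolding m_def by auto
      show ?thesis unfolding e using \<open>a\<le>-1\<close> 1 P[of m] by (simp add: power_add eval_nat_numeral)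
    next
      case 2
      define m where "m = nat(\<bar>a\<bar>+\<bar>b\<bar>)"
      have e: "nat(\<bar>1-a\<bar>+\<bar>1-b\<bar>) = m+2" "nat(\<bar>-1-a\<bar>+\<bar>1-b\<bar>) = m" "nat(\<bar>1-a\<bar>+\<bar>-1-b\<bar>) = m+2"
        "nat(\<bar>-1-a\<bar>+\<bar>-1-b\<bar>) = m" "nat(\<bar>a\<bar>+\<bar>b\<bar>) = m" using \<open>a\<le>-1\<close> 2 unfolding m_def by auto
      show ?thesis unfolding e using \<open>a\<le>-1\<close> 2 P[of m] by (simp add: power_add eval_nat_numeral)
    next
      case 3
      define m where "m = nat(\<bar>a\<bar>+\<bar>b\<bar>-2)"
      have e: "nat(\<bar>1-a\<bar>+\<bar>1-b\<bar>) = m+4" "nat(\<bar>-1-a\<bar>+\<bar>1-b\<bar>) = m+2" "nat(\<bar>1-a\<bar>+\<bar>-1-b\<bar>) = m+2"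
        "nat(\<bar>-1-a\<bar>+\<bar>-1-b\<bar>) = m" "nat(\<bar>a\<bar>+\<bar>b\<bar>) = m+2" using \<open>a\<le>-1\<close> 3 unfolding m_def by auto
      show ?thesis unfolding e using \<open>a\<le>-1\<close> 3 P[of m] by (simp add: power_add eval_nat_numeral)
    qed
  qed
qed

theorem mainTheorem5:
  fixes D :: "int \<times> int \<Rightarrow> nat" and v :: "int \<times> int" and k :: nat
  assumes "\<And>u. weight D u \<ge> 1"
    and "D v = k" and "k \<ge> 1"
  shows "excess_weight D v \<ge> ennreal (12 / 25 * real k)"
proof -
  define f where "f u w = ennreal (real (D w) * (1/2) ^ grid_dist u w)" for u w
  define x1 where "x1 = (fst v + 1, snd v + 1)"
  define x2 where "x2 = (fst v - 1, snd v + 1)"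
  define x3 where "x3 = (fst v + 1, snd v - 1)"
  define x4 where "x4 = (fst v - 1, snd v - 1)"
  define g where "g w = ennreal (if w = v then 21/4 * real k else 0)" for w
  have SUM: "h summable_on A" for h :: "int \<times> int \<Rightarrow> ennreal" and A
    by (rule nonneg_summable_on_complete) simp
  have W: "weight D u = infsum (f u) UNIV" for u unfolding weight_def f_def by simp
  have pt: "f x1 w + f x2 w + f x3 w + f x4 w + g w \<le> ennreal (25/4) * f v w" for w
  proof -
    define a where "a = fst w - fst v"
    define b where "b = snd w - snd v"
    have K: "(1/2::real)^nat(\<bar>1-a\<bar>+\<bar>1-b\<bar>) + (1/2)^nat(\<bar>-1-a\<bar>+\<bar>1-b\<bar>) + (1/2)^nat(\<bar>1-a\<bar>+\<bar>-1-b\<bar>) + (1/2)^nat(\<bar>-1-a\<bar>+\<bar>-1-b\<bar>)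
     + (if a=0 \<and> b=0 then 21/4 else 0) \<le> 25/4 * (1/2)^nat(\<bar>a\<bar>+\<bar>b\<bar>)" by (rule key)
    have d: "grid_dist x1 w = nat(\<bar>1-a\<bar>+\<bar>1-b\<bar>)" "grid_dist x2 w = nat(\<bar>-1-a\<bar>+\<bar>1-b\<bar>)"
      "grid_dist x3 w = nat(\<bar>1-a\<bar>+\<bar>-1-b\<bar>)" "grid_dist x4 w = nat(\<bar>-1-a\<bar>+\<bar>-1-b\<bar>)"
      "grid_dist v w = nat(\<bar>a\<bar>+\<bar>b\<bar>)"
      unfolding grid_dist_def x1_def x2_def x3_def x4_def a_def b_def by (simp_all add: abs_minus_commute)
    have ab: "(a = 0 \<and> b = 0) = (w = v)" unfolding a_def b_def by (auto simp: prod_eq_iff)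
    define s where "s = (1/2::real)^nat(\<bar>1-a\<bar>+\<bar>1-b\<bar>) + (1/2)^nat(\<bar>-1-a\<bar>+\<bar>1-b\<bar>) + (1/2)^nat(\<bar>1-a\<bar>+\<bar>-1-b\<bar>) + (1/2)^nat(\<bar>-1-a\<bar>+\<bar>-1-b\<bar>)"
    have R: "real (D w) * s + (if w = v then 21/4 * real k else 0) \<le> 25/4 * (real (D w) * (1/2)^nat(\<bar>a\<bar>+\<bar>b\<bar>))"
    proof (cases "w = v")
      case True
      with K ab assms(2) have "s + 21/4 \<le> 25/4 * (1/2)^nat(\<bar>a\<bar>+\<bar>b\<bar>)" unfolding s_def by simp
      from mult_left_mono[OF this, of "real k"] True assms(2) show ?thesis by (simp add: algebra_simps)
    next
      case False
      with K ab have "s \<le> 25/4 * (1/2)^nat(\<bar>a\<bar>+\<bar>b\<bar>)" unfolding s_def by simp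
      from mult_left_mono[OF this, of "real (D w)"] False show ?thesis by (simp add: algebra_simps)
    qed
    have "f x1 w + f x2 w + f x3 w + f x4 w + g w = ennreal (real (D w) * s + (if w = v then 21/4 * real k else 0))"
      unfolding f_def g_def d s_def by (simp add: ennreal_plus[symmetric] distrib_left del: ennreal_plus)
    also have "\<dots> \<le> ennreal (25/4 * (real (D w) * (1/2)^nat(\<bar>a\<bar>+\<bar>b\<bar>)))" using R by (rule ennreal_leI)
    also have "\<dots> = ennreal (25/4) * f v w" unfolding f_def d by (simp add: ennreal_mult[symmetric] del: ennreal_mult)
    finally show ?thesis .
  qed
  have gs: "infsum g UNIV = ennreal (21/4 * real k)"
  proof -
    have "infsum g UNIV = infsum g {v}" by (rule infsum_cong_neutral) (auto simp: g_def)
    also have "\<dots> = ennreal (21/4 * real k)" by (simp add: g_def)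
    finally show ?thesis .
  qed
  have "weight D x1 + weight D x2 + weight D x3 + weight D x4 + ennreal (21/4 * real k)
      = infsum (\<lambda>w. f x1 w + f x2 w + f x3 w + f x4 w + g w) UNIV"
    unfolding W gs[symmetric]
    using infsum_add[of "\<lambda>w. f x1 w + f x2 w + f x3 w + f x4 w" UNIV g, OF SUM SUM]
      infsum_add[of "\<lambda>w. f x1 w + f x2 w + f x3 w" UNIV "f x4", OF SUM SUM]
      infsum_add[of "\<lambda>w. f x1 w + f x2 w" UNIV "f x3", OF SUM SUM]
      infsum_add[of "f x1" UNIV "f x2", OF SUM SUM] by (simp only:)
  also have "\<dots> \<le> infsum (\<lambda>w. ennreal (25/4) * f v w) UNIV"
    by (rule infsum_mono[OF SUM SUM]) (auto intro: pt)
  also have "\<dots> = ennreal (25/4) * weight D v" unfolding W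
  proof -
    have "infsum ((\<lambda>y. ennreal (25/4) * y) \<circ> f v) UNIV = ennreal (25/4) * infsum (f v) UNIV"
    proof (rule infsum_comm_additive_general)
      show "isCont (\<lambda>y. ennreal (25/4) * y) (infsum (f v) UNIV)"
        unfolding isCont_def by (rule ennreal_tendsto_cmult) (auto intro: tendsto_ident_at)
    qed (auto simp: sum_distrib_left intro: SUM)
    then show "(\<Sum>\<^sub>\<infinity>w. ennreal (25/4) * f v w) = ennreal (25/4) * infsum (f v) UNIV" by (simp add: o_def)
  qed
  finally have I: "weight D x1 + weight D x2 + weight D x3 + weight D x4 + ennreal (21/4 * real k) \<le> ennreal (25/4) * weight D v" .
  have "ennreal (4 + 21/4 * real k) \<le> weight D x1 + weight D x2 + weight D x3 + weight D x4 + ennreal (21/4 * real k)"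
  proof -
    have "ennreal (4 + 21/4 * real k) = ennreal 4 + ennreal (21/4 * real k)"
      by (rule ennreal_plus) auto
    also have "(ennreal 4) = 1 + 1 + 1 + 1" by simp
    finally have "ennreal (4 + 21/4 * real k) = 1 + 1 + 1 + 1 + ennreal (21/4 * real k)" .
    also have "\<dots> \<le> weight D x1 + weight D x2 + weight D x3 + weight D x4 + ennreal (21/4 * real k)"
      using assms(1) by (intro add_mono) auto
    finally show ?thesis .
  qed
  then have J: "ennreal (4 + 21/4 * real k) \<le> ennreal (25/4) * weight D v" using I by (rule order_trans)
  have Wv: "ennreal ((16 + 21 * real k)/25) \<le> weight D v"
  proof -
    have e: "(16 + 21 * real k)/25 = 4/25 * (4 + 21/4 * real k)" by (simp add: field_simps)
    have "ennreal ((16 + 21 * real k)/25) = ennreal (4/25) * ennreal (4 + 21/4 * real k)"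
      unfolding e by (rule ennreal_mult) auto
    also have "\<dots> \<le> ennreal (4/25) * (ennreal (25/4) * weight D v)" using J by (rule mult_left_mono) simp
    also have "\<dots> = weight D v" by (simp add: mult.assoc[symmetric] ennreal_mult[symmetric] del: ennreal_mult)
    finally show ?thesis .
  qed
  have gt: "weight D v > 1"
  proof -
    have "(1::ennreal) < ennreal ((16 + 21 * real k)/25)" 
    proof -
      have "(1::real) < (16 + 21 * real k)/25" using assms(3) by simp
      then have "ennreal 1 < ennreal ((16 + 21 * real k)/25)" by (intro ennreal_lessI) auto
      then show ?thesis by simp
    qed
    then show ?thesis using Wv by (rule less_le_trans)
  qed
  have "ennreal (12 / 25 * real k) \<le> ennreal ((16 + 21 * real k)/25) - 1"
  proof -
    have "ennreal ((16 + 21 * real k)/25) - 1 = ennreal ((16 + 21 * real k)/25 - 1)"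
      by (simp add: ennreal_minus[symmetric] del: ennreal_minus)
    moreover have "12 / 25 * real k \<le> (16 + 21 * real k)/25 - 1" using assms(3) by (simp add: field_simps)
    ultimately show ?thesis by (simp add: ennreal_leI)
  qed
  also have "\<dots> \<le> weight D v - 1" using Wv by (rule ennreal_minus_mono) simp
  finally show ?thesis unfolding excess_weight_def using gt by simp
qed
end
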